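(* Let $V=\{1,\dots,p\}$ and $F:2^V\to\mathbb{R}$ be submodular, nondecreasing, with $F(\varnothing)=0$ and $F(\{k\})>0$ for all $k$. Let $\Omega(w)=f(|w|)$ with $f$ the Lovász extension of $F$. Let $w\in\mathbb{R}^p$ with support $J=\mathrm{Supp}(w)$ and let $H$ be the smallest stable set containing $J$. Then, identifying $\mathbb{R}^V=\mathbb{R}^J\times\mathbb{R}^{H\setminus J}\times\mathbb{R}^{H^c}$, the subdifferential of $\Omega$ at $w$ is $$\partial\Omega(w)=\partial\Omega_J(w_J)\times\{0\}\times\{s_{H^c}\in\mathbb{R}^{H^c}:(\Omega^H)^\ast(s_{H^c})\leqslant1\}.$$
   Context: The Lovász extension of a set-function $G$ on a finite set $W$: for $w\in\mathbb{R}_+^W$ with $w_{j_1}\geqslant\cdots\geqslant w_{j_m}\geqslant0$, it equals $\sum_k w_{j_k}[G(\{j_1,\dots,j_k\})-G(\{j_1,\dots,j_{k-1}\})]$. A set $A\subset V$ is stable if every strict superset $B\supsetneq A$ has $F(B)>F(A)$; stable sets are closed under intersection and $V$ is stable, so the smallest stable set containing $J$ exists. For $K\subset V$: $\Omega_K(u)=f_K(|u|)$ on $\mathbb{R}^K$, where $f_K$ is the Lovász extension of the restriction $F_K(A)=F(A)$, $A\subset K$; $\Omega^K(v)=f^K(|v|)$ on $\mathbb{R}^{K^c}$, where $f^K$ is the Lovász extension of the contraction $F^K(A)=F(A\cup K)-F(K)$, $A\subset K^c$; $(\Omega^H)^\ast(s)=\max\{s^\top v:\Omega^H(v)\leqslant1\}$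 is the dual norm of $\Omega^H$. *)

theory Defs
  imports Complex_Main
begin

text \<open>Vectors in R^K (K a finite set of indices) are functions nat => real vanishing off K.\<close>
definition vecs :: "nat set \<Rightarrow> (nat \<Rightarrow> real) set" where
  "vecs K = {x. \<forall>i. i \<notin> K \<longrightarrow> x i = 0}"

definition restr :: "nat set \<Rightarrow> (nat \<Rightarrow> real) \<Rightarrow> nat \<Rightarrow> real" where
  "restr K x = (\<lambda>i. if i \<in> K then x i else 0)"

definition inner_on :: "nat set \<Rightarrow> (nat \<Rightarrow> real) \<Rightarrow> (nat \<Rightarrow> real) \<Rightarrow> real" where
  "inner_on K x y = (\<Sum>i\<in>K. x i * y i)"

definition subdiff :: "nat set \<Rightarrow> ((nat \<Rightarrow> real) \<Rightarrow> real) \<Rightarrow> (nat \<Rightarrow> real) \<Rightarrow> (nat \<Rightarrow> real) set" where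
  "subdiff W g x = {s \<in> vecs W. \<forall>u \<in> vecs W. g u \<ge> g x + inner_on W s (\<lambda>i. u i - x i)}"

text \<open>Lovasz extension of G on the finite set W, evaluated at w (with w >= 0 on W):
  order W as j_1,...,j_m with w nonincreasing and take the telescoping sum.\<close>
definition lovasz :: "(nat set \<Rightarrow> real) \<Rightarrow> nat set \<Rightarrow> (nat \<Rightarrow> real) \<Rightarrow> real" where
  "lovasz G W w =
    (let js = (SOME js. distinct js \<and> set js = W \<and> sorted_wrt (\<lambda>a b. w a \<ge> w b) js)
     in \<Sum>k<length js. w (js ! k) * (G (set (take (Suc k) js)) - G (set (take k js))))"

definition Omega :: "(nat set \<Rightarrow> real) \<Rightarrow> nat set \<Rightarrow> (nat \<Rightarrow> real) \<Rightarrow> real" where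
  "Omega F V u = lovasz F V (\<lambda>i. \<bar>u i\<bar>)"

definition Omega_restr :: "(nat set \<Rightarrow> real) \<Rightarrow> nat set \<Rightarrow> (nat \<Rightarrow> real) \<Rightarrow> real" where
  "Omega_restr F K u = lovasz F K (\<lambda>i. \<bar>u i\<bar>)"

definition Omega_contr :: "(nat set \<Rightarrow> real) \<Rightarrow> nat set \<Rightarrow> nat set \<Rightarrow> (nat \<Rightarrow> real) \<Rightarrow> real" where
  "Omega_contr F V K v = lovasz (\<lambda>A. F (A \<union> K) - F K) (V - K) (\<lambda>i. \<bar>v i\<bar>)"

definition dual_contr :: "(nat set \<Rightarrow> real) \<Rightarrow> nat set \<Rightarrow> nat set \<Rightarrow> (nat \<Rightarrow> real) \<Rightarrow> real" where
  "dual_contr F V K s = Sup {inner_on (V - K) s v | v. v \<in> vecs (V - K) \<and> Omega_contr F V K v \<le> 1}"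

definition stable :: "(nat set \<Rightarrow> real) \<Rightarrow> nat set \<Rightarrow> nat set \<Rightarrow> bool" where
  "stable F V A \<longleftrightarrow> A \<subseteq> V \<and> (\<forall>B. A \<subset> B \<and> B \<subseteq> V \<longrightarrow> F B > F A)"

definition submodular :: "(nat set \<Rightarrow> real) \<Rightarrow> nat set \<Rightarrow> bool" where
  "submodular F V \<longleftrightarrow> (\<forall>A B. A \<subseteq> V \<longrightarrow> B \<subseteq> V \<longrightarrow> F (A \<union> B) + F (A \<inter> B) \<le> F A + F B)"

definition nondecreasing :: "(nat set \<Rightarrow> real) \<Rightarrow> nat set \<Rightarrow> bool" where
  "nondecreasing F V \<longleftrightarrow> (\<forall>A B. A \<subseteq> B \<longrightarrow> B \<subseteq> V \<longrightarrow> F A \<le> F B)"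

end

theory Submission imports Defs begin

definition okl :: "(nat \<Rightarrow> real) \<Rightarrow> nat set \<Rightarrow> nat list \<Rightarrow> bool" where
 "okl w W js \<longleftrightarrow> distinct js \<and> set js = W \<and> sorted_wrt (\<lambda>a b. w a \<ge> w b) js"

lemma okl_ex: "finite W \<Longrightarrow> \<exists>js. okl w W js"
proof -
  assume f: "finite W"
  let ?js = "sort_key (\<lambda>i. - w i) (sorted_list_of_set W)"
  have "sorted (map (\<lambda>i. - w i) ?js)" by (rule sorted_sort_key)
  hence "sorted_wrt (\<lambda>a b. w a \<ge> w b) ?js" by (simp add: sorted_map)
  moreover have "distinct ?js" "set ?js = W" using f by simp_all
  ultimately show ?thesis unfolding okl_def by blast
qed

lemma lovasz_eq: "finite W \<Longrightarrow> \<exists>js. okl w W js \<and> lovasz G W w =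
   (\<Sum>k<length js. w (js ! k) * (G (set (take (Suc k) js)) - G (set (take k js))))"
proof -
  assume f: "finite W"
  define js where "js = (SOME js. distinct js \<and> set js = W \<and> sorted_wrt (\<lambda>a b. w a \<ge> w b) js)"
  have "okl w W js" unfolding js_def okl_def
    by (rule someI_ex) (use okl_ex[OF f] in \<open>simp add: okl_def\<close>)
  then show ?thesis unfolding lovasz_def Let_def js_def[symmetric] by blast
qed

lemma abel: "(\<Sum>k<m. a k * (h (Suc k) - h k)) = a m * h m - a 0 * h 0 - (\<Sum>k<m. (a (Suc k) - a k) * h (Suc k))"
  for a h :: "nat \<Rightarrow> real"
  by (induction m) (simp_all add: algebra_simps)

lemma abel2:
  fixes h b :: "nat \<Rightarrow> real" assumes "h 0 = 0"
  shows "(\<Sum>k<m. b k * (h (Suc k) - h k)) = (\<Sum>k<m. (b k - (if Suc k < m then b (Suc k) else 0)) * h (Suc k))"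
proof -
  define a where "a = (\<lambda>k. if k < m then b k else 0)"
  have "(\<Sum>k<m. b k * (h (Suc k) - h k)) = (\<Sum>k<m. a k * (h (Suc k) - h k))"
    by (rule sum.cong) (auto simp: a_def)
  also have "\<dots> = - (\<Sum>k<m. (a (Suc k) - a k) * h (Suc k))"
    using abel[of a h m] assms by (simp add: a_def)
  also have "\<dots> = (\<Sum>k<m. (a k - a (Suc k)) * h (Suc k))"
    by (simp add: sum_negf[symmetric] algebra_simps)
  also have "\<dots> = (\<Sum>k<m. (b k - (if Suc k < m then b (Suc k) else 0)) * h (Suc k))"
    by (rule sum.cong) (auto simp: a_def)
  finally show ?thesis .
qed

lemma sum_idx: "distinct js \<Longrightarrow> (\<Sum>i\<in>set js. f i) = (\<Sum>k<length js. f (js!k))"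
  by (simp add: sum.distinct_set_conv_list sum_list_sum_nth atLeast0LessThan)

lemma take_Suc_set: "distinct js \<Longrightarrow> k < length js \<Longrightarrow>
   set (take (Suc k) js) = insert (js!k) (set (take k js)) \<and> js!k \<notin> set (take k js)"
proof -
  assume d: "distinct js" and k: "k < length js"
  have e: "take (Suc k) js = take k js @ [js!k]" using k by (simp add: take_Suc_conv_app_nth)
  have "distinct (take (Suc k) js)" using d by simp
  then show ?thesis unfolding e by simp
qed

lemma tele: assumes "distinct js" "k < length js"
  shows "(\<Sum>i\<in>set (take (Suc k) js). t i) - (\<Sum>i\<in>set (take k js). t i) = (t (js!k) :: real)"
  using take_Suc_set[OF assms] by simp

lemma lin_sum: fixes t w :: "nat \<Rightarrow> real" assumes d: "distinct js" and s: "set js = W"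
  shows "(\<Sum>i\<in>W. t i * w i) = (\<Sum>k<length js. w (js!k) * ((\<Sum>i\<in>set (take (Suc k) js). t i) - (\<Sum>i\<in>set (take k js). t i)))"
proof -
  have "(\<Sum>i\<in>W. t i * w i) = (\<Sum>k<length js. t (js!k) * w (js!k))"
    using sum_idx[OF d, of "\<lambda>i. t i * w i"] unfolding s .
  also have "\<dots> = (\<Sum>k<length js. w (js!k) * ((\<Sum>i\<in>set (take (Suc k) js). t i) - (\<Sum>i\<in>set (take k js). t i)))"
  proof (rule sum.cong)
    fix k assume "k \<in> {..<length js}"
    then show "t (js!k) * w (js!k) = w (js!k) * ((\<Sum>i\<in>set (take (Suc k) js). t i) - (\<Sum>i\<in>set (take k js). t i))"
      using tele[OF d, of k t] by simp
  qed simp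
  finally show ?thesis .
qed

lemma coef_nn: assumes ok: "okl w W js" and nn: "\<forall>i\<in>W. w i \<ge> 0" and k: "k < length js"
  shows "w (js!k) - (if Suc k < length js then w (js!(Suc k)) else 0) \<ge> 0"
proof (cases "Suc k < length js")
  case True
  then show ?thesis using ok unfolding okl_def by (auto dest: sorted_wrt_nth_less)
next
  case False
  then show ?thesis using ok nn k unfolding okl_def by auto
qed

lemma lov_abel1:
  fixes t w :: "nat \<Rightarrow> real"
  assumes ok: "okl w W js"
  shows "(\<Sum>i\<in>W. t i * w i) = (\<Sum>k<length js. (w (js!k) - (if Suc k < length js then w (js!(Suc k)) else 0)) * (\<Sum>i\<in>set (take (Suc k) js). t i))"
proof -
  have d: "distinct js" and s: "set js = W" using ok unfolding okl_def by auto
  show ?thesis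
    unfolding lin_sum[OF d s, of t w]
    using abel2[of "\<lambda>k. (\<Sum>i\<in>set (take k js). t i)" "\<lambda>k. w (js!k)" "length js"] by simp
qed

lemma lov_abel2:
  fixes G :: "nat set \<Rightarrow> real" and w :: "nat \<Rightarrow> real"
  assumes G0: "G {} = 0"
  shows "(\<Sum>k<length js. w (js ! k) * (G (set (take (Suc k) js)) - G (set (take k js))))
        = (\<Sum>k<length js. (w (js!k) - (if Suc k < length js then w (js!(Suc k)) else 0)) * G (set (take (Suc k) js)))"
    using abel2[of "\<lambda>k. G (set (take k js))" "\<lambda>k. w (js!k)" "length js"] G0 by simp

lemma lov_upper:
  fixes G :: "nat set \<Rightarrow> real" and t w :: "nat \<Rightarrow> real"
  assumes f: "finite W" and G0: "G {} = 0" and nn: "\<forall>i\<in>W. w i \<ge> 0"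
    and tb: "\<forall>A\<subseteq>W. (\<Sum>i\<in>A. t i) \<le> G A"
  shows "(\<Sum>i\<in>W. t i * w i) \<le> lovasz G W w"
proof -
  obtain js where ok: "okl w W js" and L: "lovasz G W w =
   (\<Sum>k<length js. w (js ! k) * (G (set (take (Suc k) js)) - G (set (take k js))))"
    using lovasz_eq[OF f] by blast
  have s: "set js = W" using ok unfolding okl_def by auto
  show ?thesis unfolding L lov_abel1[OF ok] lov_abel2[where G=G, OF G0]
  proof (rule sum_mono)
    fix k assume k: "k \<in> {..<length js}"
    have "(\<Sum>i\<in>set (take (Suc k) js). t i) \<le> G (set (take (Suc k) js))"
      using tb s set_take_subset[of "Suc k" js] by auto
    then show "(w (js!k) - (if Suc k < length js then w (js!(Suc k)) else 0)) * (\<Sum>i\<in>set (take (Suc k) js). t i)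
      \<le> (w (js!k) - (if Suc k < length js then w (js!(Suc k)) else 0)) * G (set (take (Suc k) js))"
      using coef_nn[OF ok nn] k by (intro mult_left_mono) auto
  qed
qed

lemma lov_tight:
  fixes G :: "nat set \<Rightarrow> real" and t w :: "nat \<Rightarrow> real"
  assumes f: "finite W" and G0: "G {} = 0" and pos: "\<forall>i\<in>W. w i > 0"
    and tb: "\<forall>A\<subseteq>W. (\<Sum>i\<in>A. t i) \<le> G A"
    and eq: "(\<Sum>i\<in>W. t i * w i) = lovasz G W w"
  shows "(\<Sum>i\<in>W. t i) = G W"
proof (cases "W = {}")
  case True then show ?thesis using G0 by simp
next
  case False
  have nn: "\<forall>i\<in>W. w i \<ge> 0" using pos by force
  obtain js where ok: "okl w W js" and L: "lovasz G W w =
   (\<Sum>k<length js. w (js ! k) * (G (set (take (Suc k) js)) - G (set (take k js))))"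
    using lovasz_eq[OF f] by blast
  have s: "set js = W" using ok unfolding okl_def by auto
  define c where "c = (\<lambda>k. w (js!k) - (if Suc k < length js then w (js!(Suc k)) else 0))"
  define d where "d = (\<lambda>k. G (set (take (Suc k) js)) - (\<Sum>i\<in>set (take (Suc k) js). t i))"
  have cn: "\<forall>k\<in>{..<length js}. c k \<ge> 0" using coef_nn[OF ok nn] unfolding c_def by auto
  have dn: "\<forall>k\<in>{..<length js}. d k \<ge> 0" using tb s set_take_subset[of _ js] unfolding d_def by auto
  have "(\<Sum>k<length js. c k * d k) = 0"
    using eq unfolding L lov_abel1[OF ok] lov_abel2[where G=G, OF G0] c_def d_def
    by (simp add: right_diff_distrib sum_subtractf)
  then have z: "\<forall>k\<in>{..<length js}. c k * d k = 0"
    using cn dn by (subst sum_nonneg_eq_0_iff[symmetric]) auto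
  have m: "length js > 0" using False s by auto
  define k where "k = length js - 1"
  have k: "k < length js" "Suc k = length js" using m unfolding k_def by auto
  have "c k > 0" unfolding c_def using k pos s by auto
  then have "d k = 0" using z k(1) by force
  then show ?thesis unfolding d_def using k s by simp
qed

definition posn :: "nat list \<Rightarrow> nat \<Rightarrow> nat" where
  "posn js i = (THE k. k < length js \<and> js!k = i)"

lemma posn_nth: "distinct js \<Longrightarrow> k < length js \<Longrightarrow> posn js (js!k) = k"
  unfolding posn_def by (rule the_equality) (auto simp: nth_eq_iff_index_eq)

definition greedy :: "(nat set \<Rightarrow> real) \<Rightarrow> nat list \<Rightarrow> nat \<Rightarrow> real" where
  "greedy G js i = (if i \<in> set js then G (set (take (Suc (posn js i)) js)) - G (set (take (posn js i) js)) else 0)"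

lemma greedy_nth: "distinct js \<Longrightarrow> k < length js \<Longrightarrow>
   greedy G js (js!k) = G (set (take (Suc k) js)) - G (set (take k js))"
  unfolding greedy_def by (simp add: posn_nth)

lemma greedy_nn: assumes d: "distinct js" and s: "set js = W" and mono: "nondecreasing G W"
  shows "greedy G js i \<ge> 0"
proof (cases "i \<in> set js")
  case True
  then obtain k where k: "k < length js" "i = js!k" by (auto simp: in_set_conv_nth)
  have "set (take k js) \<subseteq> set (take (Suc k) js)" by (simp add: set_take_subset_set_take)
  moreover have "set (take (Suc k) js) \<subseteq> W" using s set_take_subset by metis
  ultimately show ?thesis using mono k greedy_nth[OF d k(1)] unfolding nondecreasing_def by auto
next
  case False then show ?thesis by (simp add: greedy_def)
qed

lemma greedy_bound:
  assumes d: "distinct js" and s: "set js = W" and G0: "G {} = 0" and sub: "submodular G W"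
  shows "\<forall>A\<subseteq>W. (\<Sum>i\<in>A. greedy G js i) \<le> G A"
proof -
  have "\<forall>A\<subseteq>set (take n js). (\<Sum>i\<in>A. greedy G js i) \<le> G A" if "n \<le> length js" for n
    using that
  proof (induction n)
    case 0 then show ?case using G0 by simp
  next
    case (Suc n)
    then have n: "n < length js" by simp
    note ts = take_Suc_set[OF d n]
    show ?case
    proof (intro allI impI)
      fix A assume A: "A \<subseteq> set (take (Suc n) js)"
      show "(\<Sum>i\<in>A. greedy G js i) \<le> G A"
      proof (cases "js!n \<in> A")
        case False
        then have "A \<subseteq> set (take n js)" using A ts by auto
        then show ?thesis using Suc by simp
      next
        case True
        define A' where "A' = A - {js!n}"
        have A': "A' \<subseteq> set (take n js)" using A ts unfolding A'_def by auto
        have fin: "finite A" using A finite_subset by blast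
        have "(\<Sum>i\<in>A. greedy G js i) = greedy G js (js!n) + (\<Sum>i\<in>A'. greedy G js i)"
          unfolding A'_def using True fin by (simp add: sum.remove)
        also have "\<dots> \<le> G (set (take (Suc n) js)) - G (set (take n js)) + G A'"
          using Suc A' greedy_nth[OF d n, of G] by simp
        also have "\<dots> \<le> G A"
        proof -
          have u: "A \<union> set (take n js) = set (take (Suc n) js)" using A ts True by auto
          have i: "A \<inter> set (take n js) = A'" using A ts True unfolding A'_def by auto
          have "A \<subseteq> W" "set (take n js) \<subseteq> W" using A s set_take_subset by (metis order_trans)+
          then have "G (A \<union> set (take n js)) + G (A \<inter> set (take n js)) \<le> G A + G (set (take n js))"
            using sub unfolding submodular_def by blast
          then show ?thesis unfolding u i by simp
        qed
        finally show ?thesis .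
      qed
    qed
  qed
  from this[of "length js"] show ?thesis using s by simp
qed

definition Dset :: "(nat set \<Rightarrow> real) \<Rightarrow> nat set \<Rightarrow> (nat \<Rightarrow> real) set" where
  "Dset G W = {s \<in> vecs W. \<forall>A\<subseteq>W. (\<Sum>i\<in>A. \<bar>s i\<bar>) \<le> G A}"

lemma inner_vecs: "s \<in> vecs W \<Longrightarrow> finite W \<Longrightarrow> inner_on W s u \<le> (\<Sum>i\<in>W. \<bar>s i\<bar> * \<bar>u i\<bar>)"
  unfolding inner_on_def by (intro sum_mono) (simp add: abs_mult[symmetric])

lemma F1:
  assumes f: "finite W" and G0: "G {} = 0" and s: "s \<in> Dset G W"
  shows "inner_on W s u \<le> lovasz G W (\<lambda>i. \<bar>u i\<bar>)"
proof -
  have "inner_on W s u \<le> (\<Sum>i\<in>W. \<bar>s i\<bar> * \<bar>u i\<bar>)" unfolding inner_on_def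
    by (intro sum_mono) (metis abs_ge_self abs_mult)
  also have "\<dots> \<le> lovasz G W (\<lambda>i. \<bar>u i\<bar>)"
    by (rule lov_upper[where G=G, OF f G0]) (use s in \<open>auto simp: Dset_def\<close>)
  finally show ?thesis .
qed

lemma F2:
  assumes f: "finite W" and G0: "G {} = 0" and sub: "submodular G W" and mono: "nondecreasing G W"
  shows "\<exists>s\<in>Dset G W. inner_on W s u = lovasz G W (\<lambda>i. \<bar>u i\<bar>)"
proof -
  obtain js where ok: "okl (\<lambda>i. \<bar>u i\<bar>) W js" and L: "lovasz G W (\<lambda>i. \<bar>u i\<bar>) =
   (\<Sum>k<length js. \<bar>u (js ! k)\<bar> * (G (set (take (Suc k) js)) - G (set (take k js))))"
    using lovasz_eq[OF f] by blast
  have d: "distinct js" and sj: "set js = W" using ok unfolding okl_def by auto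
  define g where "g = greedy G js"
  define s where "s = (\<lambda>i. if u i < 0 then - g i else g i)"
  have gn: "\<And>i. g i \<ge> 0" unfolding g_def using greedy_nn[OF d sj mono] .
  have as: "\<And>i. \<bar>s i\<bar> = g i" unfolding s_def using gn by auto
  have su: "\<And>i. s i * u i = g i * \<bar>u i\<bar>" unfolding s_def by auto
  have "s \<in> vecs W" unfolding vecs_def s_def g_def greedy_def using sj by auto
  moreover have "\<forall>A\<subseteq>W. (\<Sum>i\<in>A. \<bar>s i\<bar>) \<le> G A"
    unfolding as g_def using greedy_bound[OF d sj G0 sub] .
  ultimately have sD: "s \<in> Dset G W" unfolding Dset_def by blast
  have "inner_on W s u = (\<Sum>i\<in>W. g i * \<bar>u i\<bar>)" unfolding inner_on_def su ..
  also have "\<dots> = (\<Sum>k<length js. g (js!k) * \<bar>u (js!k)\<bar>)"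
    using sum_idx[OF d, of "\<lambda>i. g i * \<bar>u i\<bar>"] sj by simp
  also have "\<dots> = lovasz G W (\<lambda>i. \<bar>u i\<bar>)" unfolding L
    by (rule sum.cong) (auto simp: g_def greedy_nth[OF d])
  finally show ?thesis using sD by blast
qed

lemma Lbound:
  assumes f: "finite W" and G0: "G {} = 0" and sub: "submodular G W" and mono: "nondecreasing G W"
    and A: "A \<subseteq> W" and z: "\<forall>i. i \<notin> A \<longrightarrow> u i = 0" and b: "\<forall>i\<in>A. \<bar>u i\<bar> \<le> c" and c: "c \<ge> 0"
  shows "lovasz G W (\<lambda>i. \<bar>u i\<bar>) \<le> c * G A"
proof -
  obtain s where sD: "s \<in> Dset G W" and e: "inner_on W s u = lovasz G W (\<lambda>i. \<bar>u i\<bar>)"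
    using F2[OF f G0 sub mono] by blast
  have "inner_on W s u \<le> (\<Sum>i\<in>W. \<bar>s i\<bar> * \<bar>u i\<bar>)" unfolding inner_on_def
    by (intro sum_mono) (metis abs_ge_self abs_mult)
  also have "\<dots> = (\<Sum>i\<in>A. \<bar>s i\<bar> * \<bar>u i\<bar>)"
    by (rule sum.mono_neutral_right) (use f A z in auto)
  also have "\<dots> \<le> (\<Sum>i\<in>A. \<bar>s i\<bar> * c)"
    by (intro sum_mono mult_left_mono) (use b in auto)
  also have "\<dots> = c * (\<Sum>i\<in>A. \<bar>s i\<bar>)" by (simp add: sum_distrib_left mult.commute)
  also have "\<dots> \<le> c * G A" using sD A c unfolding Dset_def by (auto intro: mult_left_mono)
  finally show ?thesis using e by simp
qed

lemma inner_diff: "inner_on W s (\<lambda>i. u i - x i) = inner_on W s u - inner_on W s x"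
  unfolding inner_on_def by (simp add: right_diff_distrib sum_subtractf)

lemma CHAR:
  assumes f: "finite W" and G0: "G {} = 0" and sub: "submodular G W" and mono: "nondecreasing G W"
    and x: "x \<in> vecs W"
  shows "subdiff W (\<lambda>u. lovasz G W (\<lambda>i. \<bar>u i\<bar>)) x = {s \<in> Dset G W. inner_on W s x = lovasz G W (\<lambda>i. \<bar>x i\<bar>)}"
    (is "?L = ?R")
proof
  let ?O = "\<lambda>u. lovasz G W (\<lambda>i. \<bar>u i\<bar>)"
  show "?R \<subseteq> ?L"
  proof
    fix s assume "s \<in> ?R"
    then have sD: "s \<in> Dset G W" and e: "inner_on W s x = ?O x" by auto
    have "\<forall>u\<in>vecs W. ?O u \<ge> ?O x + inner_on W s (\<lambda>i. u i - x i)"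
      using F1[OF f G0 sD] e by (simp add: inner_diff)
    then show "s \<in> ?L" using sD unfolding subdiff_def Dset_def by auto
  qed
  show "?L \<subseteq> ?R"
  proof
    fix s assume "s \<in> ?L"
    then have sv: "s \<in> vecs W" and sg: "\<And>u. u \<in> vecs W \<Longrightarrow> ?O u \<ge> ?O x + inner_on W s (\<lambda>i. u i - x i)"
      unfolding subdiff_def by auto
    have zero: "?O (\<lambda>i. 0) = 0"
      using F2[OF f G0 sub mono, of "\<lambda>i. 0"] by (auto simp: inner_on_def)
    have "?O (\<lambda>i. 0) \<ge> ?O x + inner_on W s (\<lambda>i. 0 - x i)" using sg[of "\<lambda>i. 0"] by (simp add: vecs_def)
    then have ge: "inner_on W s x \<ge> ?O x" using zero inner_diff[of W s "\<lambda>i. 0" x] by (simp add: inner_on_def)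
    have x2: "(\<lambda>i. 2 * x i) \<in> vecs W" using x by (simp add: vecs_def)
    have "?O (\<lambda>i. 2 * x i) \<ge> ?O x + inner_on W s (\<lambda>i. 2 * x i - x i)" using sg[OF x2] .
    moreover have "?O (\<lambda>i. 2 * x i) \<le> 2 * ?O x"
    proof -
      obtain s' where s'D: "s' \<in> Dset G W" and e: "inner_on W s' (\<lambda>i. 2 * x i) = ?O (\<lambda>i. 2 * x i)"
        using F2[OF f G0 sub mono] by blast
      have "inner_on W s' (\<lambda>i. 2 * x i) = 2 * inner_on W s' x"
        unfolding inner_on_def by (simp add: sum_distrib_left algebra_simps)
      then show ?thesis using e F1[OF f G0 s'D, of x] by simp
    qed
    ultimately have "inner_on W s x \<le> ?O x" by simp
    with ge have eq: "inner_on W s x = ?O x" by simp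
    have "\<forall>A\<subseteq>W. (\<Sum>i\<in>A. \<bar>s i\<bar>) \<le> G A"
    proof (intro allI impI)
      fix A assume A: "A \<subseteq> W"
      define u where "u = (\<lambda>i. if i \<in> A then (if s i < 0 then -1 else 1) else (0::real))"
      have uv: "u \<in> vecs W" using A unfolding u_def vecs_def by auto
      have xu: "(\<lambda>i. x i + u i) \<in> vecs W" using uv x unfolding vecs_def by auto
      have "?O (\<lambda>i. x i + u i) \<ge> ?O x + inner_on W s u" using sg[OF xu] by simp
      moreover have "?O (\<lambda>i. x i + u i) \<le> ?O x + ?O u"
      proof -
        obtain s' where s'D: "s' \<in> Dset G W" and e: "inner_on W s' (\<lambda>i. x i + u i) = ?O (\<lambda>i. x i + u i)"
          using F2[OF f G0 sub mono] by blast
        have "inner_on W s' (\<lambda>i. x i + u i) = inner_on W s' x + inner_on W s' u"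
          unfolding inner_on_def by (simp add: sum.distrib algebra_simps)
        then show ?thesis using e F1[OF f G0 s'D, of x] F1[OF f G0 s'D, of u] by simp
      qed
      moreover have "?O u \<le> 1 * G A"
        by (rule Lbound[OF f G0 sub mono A]) (auto simp: u_def)
      moreover have "inner_on W s u = (\<Sum>i\<in>A. \<bar>s i\<bar>)"
      proof -
        have "inner_on W s u = (\<Sum>i\<in>A. s i * u i)" unfolding inner_on_def
          by (rule sum.mono_neutral_right) (use f A in \<open>auto simp: u_def\<close>)
        also have "\<dots> = (\<Sum>i\<in>A. \<bar>s i\<bar>)" by (rule sum.cong) (auto simp: u_def)
        finally show ?thesis .
      qed
      ultimately show "(\<Sum>i\<in>A. \<bar>s i\<bar>) \<le> G A" by simp
    qed
    then show "s \<in> ?R" using sv eq unfolding Dset_def by auto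
  qed
qed

lemma DUAL:
  assumes f: "finite W" and G0: "G {} = 0" and sub: "submodular G W" and mono: "nondecreasing G W"
    and pos: "\<forall>A\<subseteq>W. A \<noteq> {} \<longrightarrow> G A > 0" and r: "r \<in> vecs W"
  shows "Sup {inner_on W r v | v. v \<in> vecs W \<and> lovasz G W (\<lambda>i. \<bar>v i\<bar>) \<le> 1} \<le> 1 \<longleftrightarrow> r \<in> Dset G W"
proof -
  let ?O = "\<lambda>u. lovasz G W (\<lambda>i. \<bar>u i\<bar>)"
  let ?S = "{inner_on W r v | v. v \<in> vecs W \<and> ?O v \<le> 1}"
  have zero: "?O (\<lambda>i. 0) = 0"
    using F2[OF f G0 sub mono, of "\<lambda>i. 0"] by (auto simp: inner_on_def)
  have ne: "?S \<noteq> {}" using zero by (auto simp: vecs_def)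
  have bdd: "bdd_above ?S"
  proof (cases "W = {}")
    case True
    then show ?thesis by (auto simp: inner_on_def bdd_above_def)
  next
    case False
    define M where "M = (\<Sum>i\<in>W. \<bar>r i\<bar>)"
    define c0 where "c0 = Min ((\<lambda>k. G {k}) ` W)"
    have c0: "c0 > 0" unfolding c0_def using f False pos by (subst Min_gr_iff) auto
    have M: "M \<ge> 0" unfolding M_def by (simp add: sum_nonneg)
    define l where "l = c0 / (M + 1)"
    have l: "l > 0" unfolding l_def using c0 M by simp
    have lM: "l * M \<le> c0"
    proof -
      have "l * M = c0 * (M / (M + 1))" unfolding l_def by simp
      also have "\<dots> \<le> c0 * 1" using c0 M by (intro mult_left_mono) auto
      finally show ?thesis by simp
    qed
    define t where "t = (\<lambda>i. l * r i)"
    have tD: "t \<in> Dset G W"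
      unfolding Dset_def
    proof (intro CollectI conjI allI impI)
      show "t \<in> vecs W" using r unfolding t_def vecs_def by auto
      fix A assume A: "A \<subseteq> W"
      show "(\<Sum>i\<in>A. \<bar>t i\<bar>) \<le> G A"
      proof (cases "A = {}")
        case True then show ?thesis using G0 by simp
      next
        case False
        then obtain k where k: "k \<in> A" by auto
        have "(\<Sum>i\<in>A. \<bar>t i\<bar>) = l * (\<Sum>i\<in>A. \<bar>r i\<bar>)"
          unfolding t_def using l by (simp add: abs_mult sum_distrib_left)
        also have "\<dots> \<le> l * M" unfolding M_def using l A f
          by (intro mult_left_mono sum_mono2) auto
        also have "\<dots> \<le> c0" by (rule lM)
        also have "\<dots> \<le> G {k}" unfolding c0_def using f k A by (intro Min_le) auto
        also have "\<dots> \<le> G A" using mono k A unfolding nondecreasing_def by auto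
        finally show ?thesis .
      qed
    qed
    show ?thesis unfolding bdd_above_def
    proof (intro exI ballI)
      fix x assume "x \<in> ?S"
      then obtain v where v: "x = inner_on W r v" "?O v \<le> 1" by auto
      have "inner_on W t v = l * x" unfolding v t_def inner_on_def by (simp add: sum_distrib_left algebra_simps)
      then have "l * x \<le> 1" using F1[OF f G0 tD, of v] v by simp
      then show "x \<le> 1 / l" using l by (simp add: field_simps)
    qed
  qed
  show ?thesis
  proof
    assume le: "Sup ?S \<le> 1"
    have all: "\<And>x. x \<in> ?S \<Longrightarrow> x \<le> 1" using cSup_upper[OF _ bdd] le by force
    have "\<forall>A\<subseteq>W. (\<Sum>i\<in>A. \<bar>r i\<bar>) \<le> G A"
    proof (intro allI impI)
      fix A assume A: "A \<subseteq> W"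
      show "(\<Sum>i\<in>A. \<bar>r i\<bar>) \<le> G A"
      proof (cases "A = {}")
        case True then show ?thesis using G0 by simp
      next
        case False
        then have c: "G A > 0" using pos A by auto
        define v where "v = (\<lambda>i. if i \<in> A then (if r i < 0 then -1 else 1) / G A else (0::real))"
        have vv: "v \<in> vecs W" using A unfolding v_def vecs_def by auto
        have "?O v \<le> (1 / G A) * G A"
          by (rule Lbound[OF f G0 sub mono A]) (use c in \<open>auto simp: v_def\<close>)
        then have "?O v \<le> 1" using c by simp
        then have "inner_on W r v \<le> 1" using all vv by blast
        moreover have "inner_on W r v = (\<Sum>i\<in>A. \<bar>r i\<bar>) / G A"
        proof -
          have "inner_on W r v = (\<Sum>i\<in>A. r i * v i)" unfolding inner_on_def
            by (rule sum.mono_neutral_right) (use f A in \<open>auto simp: v_def\<close>)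
          also have "\<dots> = (\<Sum>i\<in>A. \<bar>r i\<bar> / G A)" by (rule sum.cong) (auto simp: v_def)
          also have "\<dots> = (\<Sum>i\<in>A. \<bar>r i\<bar>) / G A" by (simp add: sum_divide_distrib)
          finally show ?thesis .
        qed
        ultimately show ?thesis using c by (simp add: divide_le_eq)
      qed
    qed
    then show "r \<in> Dset G W" using r unfolding Dset_def by auto
  next
    assume rD: "r \<in> Dset G W"
    show "Sup ?S \<le> 1"
    proof (rule cSup_least[OF ne])
      fix x assume "x \<in> ?S"
      then obtain v where v: "x = inner_on W r v" "?O v \<le> 1" by auto
      then show "x \<le> 1" using F1[OF f G0 rD, of v] by simp
    qed
  qed
qed

theorem lemma1:
  fixes p :: nat and F :: "nat set \<Rightarrow> real" and w :: "nat \<Rightarrow> real"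
    and J H :: "nat set"
  assumes V: "V = {1..p}"
    and sub: "submodular F V"
    and mono: "nondecreasing F V"
    and F0: "F {} = 0"
    and Fpos: "\<forall>k\<in>V. F {k} > 0"
    and w: "w \<in> vecs V"
    and J: "J = {i \<in> V. w i \<noteq> 0}"
    and H_stable: "stable F V H" and JH: "J \<subseteq> H"
    and H_min: "\<forall>A. stable F V A \<and> J \<subseteq> A \<longrightarrow> H \<subseteq> A"
  shows "subdiff V (Omega F V) w =
    {s \<in> vecs V. restr J s \<in> subdiff J (Omega_restr F J) (restr J w)
               \<and> (\<forall>i \<in> H - J. s i = 0)
               \<and> dual_contr F V H (restr (V - H) s) \<le> 1}"
proof -
  have fV: "finite V" using V by simp
  have JV: "J \<subseteq> V" using J by auto
  have HV: "H \<subseteq> V" using H_stable unfolding stable_def by auto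
  have fJ: "finite J" using finite_subset[OF JV fV] .
  have fH: "finite H" using finite_subset[OF HV fV] .
  have fVH: "finite (V - H)" using fV by simp
  have subJ: "submodular F J" unfolding submodular_def
  proof (intro allI impI)
    fix A B assume "A \<subseteq> J" "B \<subseteq> J"
    then have "A \<subseteq> V" "B \<subseteq> V" using JV by auto
    then show "F (A \<union> B) + F (A \<inter> B) \<le> F A + F B" using sub unfolding submodular_def by blast
  qed
  have monoJ: "nondecreasing F J" unfolding nondecreasing_def
  proof (intro allI impI)
    fix A B assume "A \<subseteq> B" "B \<subseteq> J"
    then have "B \<subseteq> V" using JV by auto
    then show "F A \<le> F B" using mono \<open>A \<subseteq> B\<close> unfolding nondecreasing_def by blast
  qed
  define GH where "GH = (\<lambda>A. F (A \<union> H) - F H)"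
  have GH0: "GH {} = 0" unfolding GH_def by simp
  have subH: "submodular GH (V - H)" unfolding submodular_def GH_def
  proof (intro allI impI)
    fix A B assume A: "A \<subseteq> V - H" and B: "B \<subseteq> V - H"
    have "A \<union> H \<subseteq> V" "B \<union> H \<subseteq> V" using A B HV by auto
    then have "F ((A \<union> H) \<union> (B \<union> H)) + F ((A \<union> H) \<inter> (B \<union> H)) \<le> F (A \<union> H) + F (B \<union> H)"
      using sub unfolding submodular_def by blast
    moreover have "(A \<union> H) \<union> (B \<union> H) = A \<union> B \<union> H" "(A \<union> H) \<inter> (B \<union> H) = A \<inter> B \<union> H" by auto
    ultimately show "F (A \<union> B \<union> H) - F H + (F (A \<inter> B \<union> H) - F H) \<le> F (A \<union> H) - F H + (F (B \<union> H) - F H)"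
      by simp
  qed
  have monoH: "nondecreasing GH (V - H)" unfolding nondecreasing_def GH_def
  proof (intro allI impI)
    fix A B assume "A \<subseteq> B" "B \<subseteq> V - H"
    then have "A \<union> H \<subseteq> B \<union> H" "B \<union> H \<subseteq> V" using HV by auto
    then show "F (A \<union> H) - F H \<le> F (B \<union> H) - F H" using mono unfolding nondecreasing_def by simp
  qed
  have posH: "\<forall>A\<subseteq>V - H. A \<noteq> {} \<longrightarrow> GH A > 0"
  proof (intro allI impI)
    fix A assume A: "A \<subseteq> V - H" "A \<noteq> {}"
    then have "H \<subset> A \<union> H" "A \<union> H \<subseteq> V" using HV by auto
    then show "GH A > 0" using H_stable unfolding stable_def GH_def by auto
  qed
  have FJH: "F J = F H"
  proof -
    define \<B> where "\<B> = {B. J \<subseteq> B \<and> B \<subseteq> V \<and> F B = F J}"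
    have "\<B> \<subseteq> Pow V" unfolding \<B>_def by auto
    then have fB: "finite \<B>" by (rule finite_subset) (use fV in simp)
    have JB: "J \<in> \<B>" unfolding \<B>_def using JV by auto
    have "Max (card ` \<B>) \<in> card ` \<B>" using fB JB by (intro Max_in) auto
    then obtain K where K: "K \<in> \<B>" and cK: "card K = Max (card ` \<B>)" by auto
    have Kmax: "\<And>B. B \<in> \<B> \<Longrightarrow> card B \<le> card K" unfolding cK using fB by simp
    have KV: "K \<subseteq> V" and JK: "J \<subseteq> K" and FK: "F K = F J" using K unfolding \<B>_def by auto
    have "stable F V K" unfolding stable_def
    proof (intro conjI allI impI KV)
      fix B assume B: "K \<subset> B \<and> B \<subseteq> V"
      have ge: "F K \<le> F B" using mono B unfolding nondecreasing_def by auto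
      show "F B > F K"
      proof (rule ccontr)
        assume "\<not> F B > F K"
        then have "F B = F J" using ge FK by simp
        then have "B \<in> \<B>" unfolding \<B>_def using B JK by auto
        then have "card B \<le> card K" by (rule Kmax)
        moreover have "finite B" using B fV finite_subset by auto
        then have "card K < card B" using B psubset_card_mono by blast
        ultimately show False by simp
      qed
    qed
    then have "H \<subseteq> K" using H_min JK by blast
    then have "F H \<le> F K" using mono KV unfolding nondecreasing_def by auto
    moreover have "F J \<le> F H" using mono JH HV unfolding nondecreasing_def by auto
    ultimately show ?thesis using FK by simp
  qed
  have OmV: "Omega F V = (\<lambda>u. lovasz F V (\<lambda>i. \<bar>u i\<bar>))" by (rule ext) (simp add: Omega_def)
  have OmJ: "Omega_restr F J = (\<lambda>u. lovasz F J (\<lambda>i. \<bar>u i\<bar>))" by (rule ext) (simp add: Omega_restr_def)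
  have wJ: "restr J w \<in> vecs J" by (simp add: restr_def vecs_def)
  note CV = CHAR[OF fV F0 sub mono w]
  note CJ = CHAR[OF fJ F0 subJ monoJ wJ]
  have innerJ: "\<And>s. inner_on V s w = inner_on J (restr J s) (restr J w)"
  proof -
    fix s
    have "inner_on V s w = (\<Sum>i\<in>J. s i * w i)" unfolding inner_on_def
      by (rule sum.mono_neutral_right) (use fV JV J in auto)
    also have "\<dots> = inner_on J (restr J s) (restr J w)" unfolding inner_on_def
      by (rule sum.cong) (auto simp: restr_def)
    finally show "inner_on V s w = inner_on J (restr J s) (restr J w)" .
  qed
  have restrD: "\<And>s. s \<in> Dset F V \<Longrightarrow> restr J s \<in> Dset F J"
  proof -
    fix s assume sD: "s \<in> Dset F V"
    have "\<forall>A\<subseteq>J. (\<Sum>i\<in>A. \<bar>restr J s i\<bar>) \<le> F A"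
    proof (intro allI impI)
      fix A assume A: "A \<subseteq> J"
      have "(\<Sum>i\<in>A. \<bar>restr J s i\<bar>) = (\<Sum>i\<in>A. \<bar>s i\<bar>)" using A by (intro sum.cong) (auto simp: restr_def)
      also have "\<dots> \<le> F A" using sD A JV unfolding Dset_def by auto
      finally show "(\<Sum>i\<in>A. \<bar>restr J s i\<bar>) \<le> F A" .
    qed
    then show "restr J s \<in> Dset F J" unfolding Dset_def by (auto simp: vecs_def restr_def)
  qed
  have OmEq: "lovasz F V (\<lambda>i. \<bar>w i\<bar>) = lovasz F J (\<lambda>i. \<bar>restr J w i\<bar>)"
  proof (rule antisym)
    obtain s' where s'D: "s' \<in> Dset F V" and e: "inner_on V s' w = lovasz F V (\<lambda>i. \<bar>w i\<bar>)"
      using F2[OF fV F0 sub mono] by blast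
    show "lovasz F V (\<lambda>i. \<bar>w i\<bar>) \<le> lovasz F J (\<lambda>i. \<bar>restr J w i\<bar>)"
      using e innerJ[of s'] F1[OF fJ F0 restrD[OF s'D], of "restr J w"] by simp
  next
    obtain t where tD: "t \<in> Dset F J" and e: "inner_on J t (restr J w) = lovasz F J (\<lambda>i. \<bar>restr J w i\<bar>)"
      using F2[OF fJ F0 subJ monoJ] by blast
    have tv: "t \<in> vecs J" using tD unfolding Dset_def by auto
    have rt: "restr J t = t" using tv unfolding restr_def vecs_def by auto
    have tDV: "t \<in> Dset F V"
    proof -
      have "t \<in> vecs V" using tv JV unfolding vecs_def by auto
      moreover have "\<forall>A\<subseteq>V. (\<Sum>i\<in>A. \<bar>t i\<bar>) \<le> F A"
      proof (intro allI impI)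
        fix A assume A: "A \<subseteq> V"
        have fA: "finite A" using finite_subset[OF A fV] .
        have "(\<Sum>i\<in>A. \<bar>t i\<bar>) = (\<Sum>i\<in>A \<inter> J. \<bar>t i\<bar>)"
          by (rule sum.mono_neutral_right) (use fA tv in \<open>auto simp: vecs_def\<close>)
        also have "\<dots> \<le> F (A \<inter> J)" using tD unfolding Dset_def by auto
        also have "\<dots> \<le> F A" using mono A unfolding nondecreasing_def by auto
        finally show "(\<Sum>i\<in>A. \<bar>t i\<bar>) \<le> F A" .
      qed
      ultimately show ?thesis unfolding Dset_def by auto
    qed
    show "lovasz F J (\<lambda>i. \<bar>restr J w i\<bar>) \<le> lovasz F V (\<lambda>i. \<bar>w i\<bar>)"
      using e innerJ[of t] rt F1[OF fV F0 tDV, of w] by simp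
  qed
  have DH: "\<And>r. r \<in> vecs (V - H) \<Longrightarrow> dual_contr F V H r \<le> 1 \<longleftrightarrow> r \<in> Dset GH (V - H)"
  proof -
    fix r assume r: "r \<in> vecs (V - H)"
    have "dual_contr F V H r = Sup {inner_on (V - H) r v | v. v \<in> vecs (V - H) \<and> lovasz GH (V - H) (\<lambda>i. \<bar>v i\<bar>) \<le> 1}"
      by (simp add: dual_contr_def Omega_contr_def GH_def)
    then show "dual_contr F V H r \<le> 1 \<longleftrightarrow> r \<in> Dset GH (V - H)"
      using DUAL[OF fVH GH0 subH monoH posH r] by simp
  qed
  show ?thesis
  proof (rule set_eqI)
    fix s
    show "s \<in> subdiff V (Omega F V) w \<longleftrightarrow> s \<in> {s \<in> vecs V. restr J s \<in> subdiff J (Omega_restr F J) (restr J w)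
               \<and> (\<forall>i \<in> H - J. s i = 0)
               \<and> dual_contr F V H (restr (V - H) s) \<le> 1}"
    proof -
      have rv: "restr (V - H) s \<in> vecs (V - H)" by (simp add: restr_def vecs_def)
      have rJ: "inner_on J (restr J s) (restr J w) = inner_on V s w" using innerJ by simp
      have l: "s \<in> subdiff V (Omega F V) w \<longleftrightarrow> s \<in> Dset F V \<and> inner_on V s w = lovasz F V (\<lambda>i. \<bar>w i\<bar>)"
        unfolding OmV CV by simp
      have r1: "restr J s \<in> subdiff J (Omega_restr F J) (restr J w) \<longleftrightarrow> restr J s \<in> Dset F J \<and> inner_on V s w = lovasz F V (\<lambda>i. \<bar>w i\<bar>)"
        unfolding OmJ CJ OmEq using rJ by simp
      have core: "s \<in> Dset F V \<and> inner_on V s w = lovasz F V (\<lambda>i. \<bar>w i\<bar>) \<longleftrightarrow>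
         s \<in> vecs V \<and> restr J s \<in> Dset F J \<and> inner_on V s w = lovasz F V (\<lambda>i. \<bar>w i\<bar>)
         \<and> (\<forall>i \<in> H - J. s i = 0) \<and> restr (V - H) s \<in> Dset GH (V - H)"
      proof
        assume "s \<in> Dset F V \<and> inner_on V s w = lovasz F V (\<lambda>i. \<bar>w i\<bar>)"
        then have sD: "s \<in> Dset F V" and ie: "inner_on V s w = lovasz F V (\<lambda>i. \<bar>w i\<bar>)" by auto
        have sv: "s \<in> vecs V" and sb: "\<And>A. A \<subseteq> V \<Longrightarrow> (\<Sum>i\<in>A. \<bar>s i\<bar>) \<le> F A"
          using sD unfolding Dset_def by auto
        have tbJ: "\<forall>A\<subseteq>J. (\<Sum>i\<in>A. \<bar>s i\<bar>) \<le> F A"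
        proof (intro allI impI)
          fix A assume "A \<subseteq> J" then have "A \<subseteq> V" using JV by auto
          then show "(\<Sum>i\<in>A. \<bar>s i\<bar>) \<le> F A" by (rule sb)
        qed
        have eqJ: "(\<Sum>i\<in>J. \<bar>s i\<bar> * \<bar>restr J w i\<bar>) = lovasz F J (\<lambda>i. \<bar>restr J w i\<bar>)"
        proof (rule antisym)
          show "(\<Sum>i\<in>J. \<bar>s i\<bar> * \<bar>restr J w i\<bar>) \<le> lovasz F J (\<lambda>i. \<bar>restr J w i\<bar>)"
            by (rule lov_upper[where G=F, OF fJ F0]) (use tbJ in auto)
          have "lovasz F J (\<lambda>i. \<bar>restr J w i\<bar>) = inner_on J (restr J s) (restr J w)"
            using ie OmEq innerJ[of s] by simp
          also have "\<dots> \<le> (\<Sum>i\<in>J. \<bar>s i\<bar> * \<bar>restr J w i\<bar>)" unfolding inner_on_def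
            by (intro sum_mono) (auto simp: restr_def abs_mult[symmetric])
          finally show "lovasz F J (\<lambda>i. \<bar>restr J w i\<bar>) \<le> (\<Sum>i\<in>J. \<bar>s i\<bar> * \<bar>restr J w i\<bar>)" .
        qed
        have tight: "(\<Sum>i\<in>J. \<bar>s i\<bar>) = F J"
          by (rule lov_tight[where G=F, OF fJ F0 _ tbJ eqJ]) (auto simp: restr_def J)
        have aH: "(\<Sum>i\<in>H. \<bar>s i\<bar>) = (\<Sum>i\<in>H - J. \<bar>s i\<bar>) + (\<Sum>i\<in>J. \<bar>s i\<bar>)"
          by (rule sum.subset_diff[OF JH fH])
        have "(\<Sum>i\<in>H. \<bar>s i\<bar>) \<le> F H" by (rule sb[OF HV])
        then have "(\<Sum>i\<in>H - J. \<bar>s i\<bar>) \<le> 0" using aH tight FJH by simp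
        then have "(\<Sum>i\<in>H - J. \<bar>s i\<bar>) = 0" by (simp add: antisym sum_nonneg)
        then have "\<forall>i\<in>H - J. \<bar>s i\<bar> = 0" using fH sum_nonneg_eq_0_iff[of "H - J" "\<lambda>i. \<bar>s i\<bar>"] by simp
        then have zero: "\<forall>i\<in>H - J. s i = 0" by simp
        have "\<forall>A\<subseteq>V - H. (\<Sum>i\<in>A. \<bar>restr (V - H) s i\<bar>) \<le> GH A"
        proof (intro allI impI)
          fix A assume A: "A \<subseteq> V - H"
          have fA: "finite A" using finite_subset[OF A fVH] .
          have e1: "(\<Sum>i\<in>A. \<bar>restr (V - H) s i\<bar>) = (\<Sum>i\<in>A. \<bar>s i\<bar>)" using A by (intro sum.cong) (auto simp: restr_def)
          have e2: "(\<Sum>i\<in>A \<union> H. \<bar>s i\<bar>) = (\<Sum>i\<in>A. \<bar>s i\<bar>) + (\<Sum>i\<in>H. \<bar>s i\<bar>)"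
            using fA fH A by (intro sum.union_disjoint) auto
          have "(\<Sum>i\<in>A \<union> H. \<bar>s i\<bar>) \<le> F (A \<union> H)" by (rule sb) (use A HV in auto)
          moreover have "(\<Sum>i\<in>J. \<bar>s i\<bar>) \<le> (\<Sum>i\<in>H. \<bar>s i\<bar>)" using fH JH by (intro sum_mono2) auto
          ultimately show "(\<Sum>i\<in>A. \<bar>restr (V - H) s i\<bar>) \<le> GH A"
            unfolding e1 GH_def using e2 tight FJH by simp
        qed
        then have "restr (V - H) s \<in> Dset GH (V - H)" unfolding Dset_def by (auto simp: restr_def vecs_def)
        then show "s \<in> vecs V \<and> restr J s \<in> Dset F J \<and> inner_on V s w = lovasz F V (\<lambda>i. \<bar>w i\<bar>)
         \<and> (\<forall>i \<in> H - J. s i = 0) \<and> restr (V - H) s \<in> Dset GH (V - H)"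
          using sv restrD[OF sD] ie zero by auto
      next
        assume "s \<in> vecs V \<and> restr J s \<in> Dset F J \<and> inner_on V s w = lovasz F V (\<lambda>i. \<bar>w i\<bar>)
         \<and> (\<forall>i \<in> H - J. s i = 0) \<and> restr (V - H) s \<in> Dset GH (V - H)"
        then have sv: "s \<in> vecs V" and rJD: "restr J s \<in> Dset F J" and ie: "inner_on V s w = lovasz F V (\<lambda>i. \<bar>w i\<bar>)"
          and zero: "\<forall>i \<in> H - J. s i = 0" and rH: "restr (V - H) s \<in> Dset GH (V - H)" by auto
        have "\<forall>A\<subseteq>V. (\<Sum>i\<in>A. \<bar>s i\<bar>) \<le> F A"
        proof (intro allI impI)
          fix A assume A: "A \<subseteq> V"
          have fA: "finite A" using finite_subset[OF A fV] .
          have s1: "(\<Sum>i\<in>A. \<bar>s i\<bar>) = (\<Sum>i\<in>A \<inter> H. \<bar>s i\<bar>) + (\<Sum>i\<in>A - H. \<bar>s i\<bar>)"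
            using fA by (rule sum.Int_Diff)
          have s2: "(\<Sum>i\<in>A \<inter> H. \<bar>s i\<bar>) = (\<Sum>i\<in>A \<inter> J. \<bar>s i\<bar>)"
          proof (rule sum.mono_neutral_right)
            show "finite (A \<inter> H)" using fA by simp
            show "A \<inter> J \<subseteq> A \<inter> H" using JH by blast
            show "\<forall>i\<in>A \<inter> H - A \<inter> J. \<bar>s i\<bar> = 0" using zero by simp
          qed
          have "A \<inter> J \<subseteq> J" by blast
          then have "(\<Sum>i\<in>A \<inter> J. \<bar>restr J s i\<bar>) \<le> F (A \<inter> J)" using rJD unfolding Dset_def by blast
          moreover have "(\<Sum>i\<in>A \<inter> J. \<bar>restr J s i\<bar>) = (\<Sum>i\<in>A \<inter> J. \<bar>s i\<bar>)" by (intro sum.cong) (auto simp: restr_def)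
          ultimately have b1: "(\<Sum>i\<in>A \<inter> J. \<bar>s i\<bar>) \<le> F (A \<inter> J)" by simp
          have "A - H \<subseteq> V - H" using A by blast
          then have "(\<Sum>i\<in>A - H. \<bar>restr (V - H) s i\<bar>) \<le> GH (A - H)" using rH unfolding Dset_def by blast
          moreover have "(\<Sum>i\<in>A - H. \<bar>restr (V - H) s i\<bar>) = (\<Sum>i\<in>A - H. \<bar>s i\<bar>)" using A by (intro sum.cong) (auto simp: restr_def)
          moreover have "(A - H) \<union> H = A \<union> H" by auto
          ultimately have b2: "(\<Sum>i\<in>A - H. \<bar>s i\<bar>) \<le> F (A \<union> H) - F H" unfolding GH_def by simp
          have "A \<inter> J \<subseteq> A \<inter> H" "A \<inter> H \<subseteq> V" using JH A by blast+
          then have b3: "F (A \<inter> J) \<le> F (A \<inter> H)" using mono unfolding nondecreasing_def by blast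
          have b4: "F (A \<union> H) + F (A \<inter> H) \<le> F A + F H" using sub[unfolded submodular_def, rule_format, OF A HV] .
          show "(\<Sum>i\<in>A. \<bar>s i\<bar>) \<le> F A" using s1 s2 b1 b2 b3 b4 by linarith
        qed
        then show "s \<in> Dset F V \<and> inner_on V s w = lovasz F V (\<lambda>i. \<bar>w i\<bar>)"
          using sv ie unfolding Dset_def by auto
      qed
      show ?thesis unfolding l mem_Collect_eq r1 DH[OF rv] core by (simp only: conj_assoc)
    qed
  qed
qed

end
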